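(* The identity matrix $\mathbb{1}_N$ (the barycenter of the set $\mathcal I$ of Ising matrices) is a fixed point of every affine bijection $\sigma:\mathcal{G}_N\to\mathcal{G}_N$.
   Context: $\mathcal{G}_N$ is the set of real symmetric positive semi-definite $N\times N$ matrices with unit diagonal; $\mathcal{I}$ is the set of matrices $\mathbf{s}\mathbf{s}^\top$ with $\mathbf{s}\in\{\pm1\}^N$. *)

theory Defs
  imports "HOL-Analysis.Analysis"
begin

definition elliptope :: "(real^'n^'n) set" where
  "elliptope = {A. transpose A = A \<and> (\<forall>x. 0 \<le> x \<bullet> (A *v x)) \<and> (\<forall>i. A $ i $ i = 1)}"

definition ising :: "(real^'n^'n) set" where
  "ising = {A. \<exists>s::real^'n. (\<forall>i. s $ i = 1 \<or> s $ i = -1) \<and> A = (\<chi> i j. s $ i * s $ j)}"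

definition affine_on :: "'a::real_vector set \<Rightarrow> ('a \<Rightarrow> 'b::real_vector) \<Rightarrow> bool" where
  "affine_on S f \<longleftrightarrow> (\<forall>x\<in>S. \<forall>y\<in>S. \<forall>t::real. 0 \<le> t \<and> t \<le> 1 \<longrightarrow>
      f ((1 - t) *\<^sub>R x + t *\<^sub>R y) = (1 - t) *\<^sub>R f x + t *\<^sub>R f y)"

end

theory Submission
  imports Defs
begin

lemma qf: "v \<bullet> (A *v v) = (\<Sum>i\<in>UNIV. \<Sum>j\<in>UNIV. v$i * A$i$j * v$j)"
  by (simp add: inner_vec_def matrix_vector_mult_def sum_distrib_left mult.assoc)

lemma entry_bound:
  fixes A :: "real^'n^'n"
  assumes "A \<in> elliptope" shows "\<bar>A$i$j\<bar> \<le> 1"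
proof (cases "i = j")
  case True then show ?thesis using assms by (simp add: elliptope_def)
next
  case False
  have sym: "A$j$i = A$i$j" using assms unfolding elliptope_def
    by (metis (mono_tags, lifting) mem_Collect_eq transpose_def vec_lambda_beta)
  have d: "A$i$i = 1" "A$j$j = 1" using assms by (auto simp: elliptope_def)
  have psd: "\<And>x. 0 \<le> x \<bullet> (A *v x)" using assms by (auto simp: elliptope_def)
  have e: "(axis i 1 + c *\<^sub>R axis j 1) \<bullet> (A *v (axis i 1 + c *\<^sub>R axis j 1)) = 1 + 2*c*A$i$j + c*c" for c :: real
    using False
    by (simp add: algebra_simps inner_axis' matrix_vector_mult_basis column_def d sym)
  have "0 \<le> 2 + 2*A$i$j" using psd[of "axis i 1 + 1 *\<^sub>R axis j 1"] e[of 1] by simp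
  moreover have "0 \<le> 2 - 2*A$i$j" using psd[of "axis i 1 + (-1) *\<^sub>R axis j 1"] e[of "-1"] by simp
  ultimately show ?thesis by linarith
qed

lemma quad_bound:
  fixes A :: "real^'n^'n"
  assumes "A \<in> elliptope" shows "v \<bullet> (A *v v) \<le> real CARD('n) * (v \<bullet> v)"
proof -
  have "v \<bullet> (A *v v) = (\<Sum>i\<in>UNIV. \<Sum>j\<in>UNIV. v$i * A$i$j * v$j)" by (rule qf)
  also have "\<dots> \<le> (\<Sum>i\<in>UNIV. \<Sum>j\<in>UNIV. ((v$i)^2 + (v$j)^2)/2)"
  proof (intro sum_mono)
    fix i j
    have "v$i * A$i$j * v$j \<le> \<bar>v$i * A$i$j * v$j\<bar>" by simp
    also have "\<dots> = \<bar>v$i\<bar> * \<bar>A$i$j\<bar> * \<bar>v$j\<bar>" by (simp add: abs_mult)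
    also have "\<dots> \<le> \<bar>v$i\<bar> * 1 * \<bar>v$j\<bar>"
      by (intro mult_right_mono mult_left_mono entry_bound assms) auto
    also have "\<dots> \<le> ((v$i)^2 + (v$j)^2)/2"
    proof -
      have "0 \<le> (\<bar>v$i\<bar> - \<bar>v$j\<bar>)^2" by simp
      then show ?thesis by (simp add: power2_eq_square algebra_simps)
    qed
    finally show "v$i * A$i$j * v$j \<le> ((v$i)^2 + (v$j)^2)/2" .
  qed
  also have "\<dots> = (\<Sum>i\<in>UNIV. (real CARD('n) * (v$i)^2 + (\<Sum>j\<in>UNIV. (v$j)^2)) / 2)"
    by (simp add: sum.distrib add_divide_distrib sum_divide_distrib[symmetric])
  also have "\<dots> = real CARD('n) * (\<Sum>j\<in>UNIV. (v$j)^2)"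
    by (simp add: sum.distrib add_divide_distrib sum_divide_distrib[symmetric] sum_distrib_left[symmetric])
  also have "\<dots> = real CARD('n) * (v \<bullet> v)"
    by (simp add: inner_vec_def power2_eq_square)
  finally show ?thesis .
qed

lemma mat1_in: "(mat 1 :: real^'n^'n) \<in> elliptope"
  unfolding elliptope_def by (simp add: matrix_vector_mul_lid) (simp add: mat_def)

lemma compl_in:
  fixes A :: "real^'n^'n"
  assumes A: "A \<in> elliptope" and N: "CARD('n) \<ge> 2"
  shows "(1 / (real CARD('n) - 1)) *\<^sub>R (real CARD('n) *\<^sub>R mat 1 - A) \<in> elliptope"
proof -
  let ?N = "real CARD('n)"
  have pos: "?N - 1 > 0" using N by simp
  have t: "transpose A = A" and d: "\<And>i. A$i$i = 1" using A by (auto simp: elliptope_def)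
  have tr: "transpose ((1 / (?N - 1)) *\<^sub>R (?N *\<^sub>R mat 1 - A)) = (1 / (?N - 1)) *\<^sub>R (?N *\<^sub>R mat 1 - A)"
    using t by (simp add: transpose_scalar transpose_def vec_eq_iff mat_def)
  have psd: "0 \<le> x \<bullet> ((1 / (?N - 1)) *\<^sub>R (?N *\<^sub>R mat 1 - A) *v x)" for x
  proof -
    have "x \<bullet> ((1 / (?N - 1)) *\<^sub>R (?N *\<^sub>R mat 1 - A) *v x) = (?N * (x \<bullet> x) - x \<bullet> (A *v x)) / (?N - 1)"
      by (simp add: scaleR_matrix_vector_assoc[symmetric] matrix_vector_mult_diff_rdistrib
          inner_diff_right divide_simps)
    moreover have "?N * (x \<bullet> x) - x \<bullet> (A *v x) \<ge> 0" using quad_bound[OF A, of x] by simp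
    ultimately show ?thesis using pos by simp
  qed
  have diag: "((1 / (?N - 1)) *\<^sub>R (?N *\<^sub>R mat 1 - A)) $ i $ i = 1" for i
    using pos d by (simp add: mat_def divide_simps)
  show ?thesis using tr psd diag unfolding elliptope_def by blast
qed

definition sv :: "(real^'n) set" where "sv = {s. \<forall>i. s$i = 1 \<or> s$i = -1}"

lemma finite_sv: "finite (sv :: (real^'n) set)"
proof -
  have "sv \<subseteq> range (\<lambda>b::'n\<Rightarrow>bool. \<chi> i. (if b i then 1 else (-1::real)))"
  proof
    fix s :: "real^'n" assume "s \<in> sv"
    then have "s = (\<chi> i. if s$i = 1 then 1 else -1)" by (auto simp: sv_def vec_eq_iff)
    then show "s \<in> range (\<lambda>b::'n\<Rightarrow>bool. \<chi> i. (if b i then 1 else (-1::real)))"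
      by (intro image_eqI[where x="\<lambda>i. s$i = 1"]) auto
  qed
  then show ?thesis by (rule finite_subset) simp
qed

lemma sv_sq: "s \<in> sv \<Longrightarrow> s$i * s$i = 1"
  by (auto simp: sv_def) (metis mult_1 mult_minus1 minus_minus)

lemma sum_sv_pair:
  assumes "i \<noteq> j" shows "(\<Sum>s\<in>(sv::(real^'n) set). s$i * s$j) = 0"
proof -
  define f where "f = (\<lambda>s::real^'n. \<chi> k. if k = i then - s$k else s$k)"
  have ff: "f (f s) = s" for s by (simp add: f_def vec_eq_iff)
  have fsv: "f s \<in> sv" if "s \<in> sv" for s using that by (auto simp: f_def sv_def) 
  have inj: "inj_on f sv" by (metis ff inj_onI)
  have img: "f ` sv = sv" using fsv ff by (metis image_subset_iff subsetI subset_antisym image_eqI)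
  have "(\<Sum>s\<in>sv. s$i * s$j) = (\<Sum>s\<in>f ` sv. s$i * s$j)" by (simp add: img)
  also have "\<dots> = (\<Sum>s\<in>sv. (f s)$i * (f s)$j)" by (simp add: sum.reindex[OF inj])
  also have "\<dots> = - (\<Sum>s\<in>sv. s$i * s$j)" using assms by (simp add: f_def sum_negf)
  finally show ?thesis by simp
qed

lemma sum_sv_quad:
  fixes x :: "real^'n^'n"
  assumes d: "\<And>i. x$i$i = 1"
  shows "(\<Sum>s\<in>(sv::(real^'n) set). s \<bullet> (x *v s)) = real CARD('n) * real (card (sv::(real^'n) set))"
proof -
  have hh: "x$i$j * (\<Sum>s\<in>(sv::(real^'n) set). s$i * s$j) = (if j = i then real (card (sv::(real^'n) set)) else 0)" for i j
    by (cases "i = j") (simp_all add: sum_sv_pair d sv_sq)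
  have "(\<Sum>s\<in>(sv::(real^'n) set). s \<bullet> (x *v s)) = (\<Sum>s\<in>sv. \<Sum>i\<in>UNIV. \<Sum>j\<in>UNIV. s$i * x$i$j * s$j)"
    by (simp add: qf)
  also have "\<dots> = (\<Sum>i\<in>UNIV. \<Sum>j\<in>UNIV. x$i$j * (\<Sum>s\<in>sv. s$i * s$j))"
    by (subst sum.swap, subst sum.swap) (simp add: sum_distrib_left mult_ac sum.swap[of _ sv])
  also have "\<dots> = real CARD('n) * real (card (sv::(real^'n) set))"
    by (simp only: hh sum.delta' finite_UNIV) simp
  finally show ?thesis .
qed

lemma outer_in:
  assumes "s \<in> sv" shows "(\<chi> i j. s$i * s$j) \<in> elliptope"
proof -
  have mv: "(\<chi> i j. s$i * s$j) *v v = (s \<bullet> v) *\<^sub>R s" for v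
    by (simp add: vec_eq_iff matrix_vector_mult_def inner_vec_def sum_distrib_left mult_ac)
  show ?thesis unfolding elliptope_def
    using sv_sq[OF assms] by (auto simp: mv transpose_def vec_eq_iff mult.commute inner_commute[of _ s])
qed

lemma symm_bil:
  fixes x :: "real^'n^'n"
  assumes "transpose x = x" shows "a \<bullet> (x *v b) = b \<bullet> (x *v a)"
  by (metis assms dot_lmul_matrix inner_commute transpose_matrix_vector)

lemma four:
  fixes x :: "real^'n^'n"
  assumes t: "transpose x = x" and kl: "k \<noteq> l"
  defines "ov \<equiv> (\<chi> i. 1) :: real^'n" and "u \<equiv> axis k 1 :: real^'n" and "w \<equiv> axis l 1 :: real^'n"
  shows "ov \<bullet> (x *v ov) - (ov - 2 *\<^sub>R u) \<bullet> (x *v (ov - 2 *\<^sub>R u)) - (ov - 2 *\<^sub>R w) \<bullet> (x *v (ov - 2 *\<^sub>R w))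
     + (ov - 2 *\<^sub>R u - 2 *\<^sub>R w) \<bullet> (x *v (ov - 2 *\<^sub>R u - 2 *\<^sub>R w)) = 8 * x$k$l"
proof -
  have s1: "u \<bullet> (x *v ov) = ov \<bullet> (x *v u)" "w \<bullet> (x *v ov) = ov \<bullet> (x *v w)" "w \<bullet> (x *v u) = u \<bullet> (x *v w)"
    using symm_bil[OF t] by blast+
  have e: "u \<bullet> (x *v w) = x$k$l"
    by (simp add: u_def w_def matrix_vector_mult_basis column_def inner_axis')
  show ?thesis
    by (simp add: algebra_simps inner_diff_left inner_diff_right s1 e)
qed

lemma sv_inner_self: "s \<in> sv \<Longrightarrow> s \<bullet> s = real CARD('n)" for s :: "real^'n"
  by (simp add: inner_vec_def sv_sq)

theorem lemma6:
  fixes \<sigma> :: "real^'n^'n \<Rightarrow> real^'n^'n"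
  assumes "affine_on elliptope \<sigma>"
    and "bij_betw \<sigma> elliptope elliptope"
  shows "\<sigma> (mat 1) = mat 1"
proof -
  let ?N = "real CARD('n)"
  let ?x = "\<sigma> (mat 1)"
  have xin: "?x \<in> elliptope" using assms(2) mat1_in by (metis bij_betw_apply)
  have surj: "\<sigma> ` elliptope = elliptope" using assms(2) by (simp add: bij_betw_def)
  show ?thesis
  proof (cases "CARD('n) = 1")
    case True
    have eq: "i = j" for i j :: 'n using True by (metis card_1_singletonE singletonD UNIV_I)
    have "A = mat 1" if "A \<in> elliptope" for A :: "real^'n^'n"
    proof -
      have "A$i$j = mat 1 $i$j" for i j using that eq[of j i] by (simp add: elliptope_def mat_def)
      then show ?thesis by (simp add: vec_eq_iff)
    qed
    then show ?thesis using xin by blast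
  next
    case False
    then have N2: "CARD('n) \<ge> 2" 
    proof -
      have "CARD('n) > 0" by (rule finite_UNIV_card_ge_0) simp
      then show ?thesis using False by linarith
    qed
    have Npos: "?N > 0" by simp
    have xt: "transpose ?x = ?x" and xd: "\<And>i. ?x$i$i = 1" using xin by (auto simp: elliptope_def)
    have ge: "s \<bullet> (?x *v s) \<ge> ?N" if s: "s \<in> sv" for s
    proof -
      let ?M = "(\<chi> i j. s$i * s$j) :: real^'n^'n"
      have Min: "?M \<in> elliptope" by (rule outer_in[OF s])
      then obtain A where A: "A \<in> elliptope" "\<sigma> A = ?M" using surj by (metis imageE)
      define B where "B = (1 / (?N - 1)) *\<^sub>R (?N *\<^sub>R mat 1 - A)"
      have B: "B \<in> elliptope" unfolding B_def by (rule compl_in[OF A(1) N2])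
      have decomp: "mat 1 = (1 - 1/?N) *\<^sub>R B + (1/?N) *\<^sub>R A"
        using N2 by (simp add: B_def vec_eq_iff mat_def field_simps)
      have "?x = (1 - 1/?N) *\<^sub>R \<sigma> B + (1/?N) *\<^sub>R \<sigma> A"
      proof -
        have t01: "0 \<le> 1/?N" "1/?N \<le> 1" using N2 by auto
        have "\<sigma> ((1 - 1/?N) *\<^sub>R B + (1/?N) *\<^sub>R A) = (1 - 1/?N) *\<^sub>R \<sigma> B + (1/?N) *\<^sub>R \<sigma> A"
          using assms(1) B A(1) t01 unfolding affine_on_def by blast
        then show ?thesis using decomp by simp
      qed
      then have xe: "?x = (1 - 1/?N) *\<^sub>R \<sigma> B + (1/?N) *\<^sub>R ?M" using A(2) by simp
      have sB: "0 \<le> s \<bullet> (\<sigma> B *v s)" using bij_betw_apply[OF assms(2) B] by (auto simp: elliptope_def)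
      have mv: "?M *v s = (s \<bullet> s) *\<^sub>R s"
        by (simp add: vec_eq_iff matrix_vector_mult_def inner_vec_def sum_distrib_left mult_ac)
      have "s \<bullet> (?x *v s) = (1 - 1/?N) * (s \<bullet> (\<sigma> B *v s)) + (1/?N) * (?N * ?N)"
        by (simp add: xe matrix_vector_mult_add_rdistrib scaleR_matrix_vector_assoc[symmetric]
            inner_add_right mv sv_inner_self[OF s])
      moreover have "(1 - 1/?N) \<ge> 0" using N2 by (simp add: field_simps)
      ultimately show ?thesis using sB Npos by (simp add: mult_nonneg_nonneg)
    qed
    have "(\<Sum>s\<in>(sv::(real^'n) set). s \<bullet> (?x *v s) - ?N) = 0"
      by (simp add: sum_subtractf sum_sv_quad[OF xd])
    then have eqN: "s \<bullet> (?x *v s) = ?N" if "s \<in> sv" for s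
      using sum_nonneg_eq_0_iff[OF finite_sv, of "\<lambda>s. s \<bullet> (?x *v s) - ?N"] ge that by auto
    have off: "?x$k$l = 0" if kl: "k \<noteq> l" for k l
    proof -
      let ?o = "(\<chi> i. 1) :: real^'n"
      let ?u = "axis k 1 :: real^'n" and ?w = "axis l 1 :: real^'n"
      have m: "?o \<in> sv" "?o - 2 *\<^sub>R ?u \<in> sv" "?o - 2 *\<^sub>R ?w \<in> sv" "?o - 2 *\<^sub>R ?u - 2 *\<^sub>R ?w \<in> sv"
        using kl by (auto simp: sv_def axis_def)
      show ?thesis using four[OF xt kl] eqN[OF m(1)] eqN[OF m(2)] eqN[OF m(3)] eqN[OF m(4)] by simp
    qed
    show ?thesis using off xd by (auto simp: vec_eq_iff mat_def)
  qed
qed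

end
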